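(* Let $N\ge3$ and let $Q$ be a non-degenerate hermitian form on $\mathbb{C}^N$. The only additive subgroups of $\mathbb{C}^N$ invariant under the special unitary group $SU(Q)$ are $\{0\}$ and $\mathbb{C}^N$. *)

theory Defs
  imports "HOL-Analysis.Analysis"
begin

definition hermitian_form :: "(complex^'n \<Rightarrow> complex^'n \<Rightarrow> complex) \<Rightarrow> bool" where
  "hermitian_form Q \<longleftrightarrow>
     (\<forall>x y z. Q x (y + z) = Q x y + Q x z) \<and>
     (\<forall>x y (c::complex). Q x (c *s y) = c * Q x y) \<and>
     (\<forall>x y. Q y x = cnj (Q x y))"

definition nondegenerate_form :: "(complex^'n \<Rightarrow> complex^'n \<Rightarrow> complex) \<Rightarrow> bool" where
  "nondegenerate_form Q \<longleftrightarrow> (\<forall>x. (\<forall>y. Q x y = 0) \<longrightarrow> x = 0)"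

definition SU_form :: "(complex^'n \<Rightarrow> complex^'n \<Rightarrow> complex) \<Rightarrow> (complex^'n^'n) set" where
  "SU_form Q = {A. det A = 1 \<and> (\<forall>x y. Q (A *v x) (A *v y) = Q x y)}"

definition additive_subgroup :: "(complex^'n) set \<Rightarrow> bool" where
  "additive_subgroup G \<longleftrightarrow> 0 \<in> G \<and> (\<forall>x\<in>G. \<forall>y\<in>G. x + y \<in> G) \<and> (\<forall>x\<in>G. - x \<in> G)"

end

theory Submission imports Defs "HOL-Computational_Algebra.Polynomial" begin

definition dotc :: "'a::comm_ring_1^'n \<Rightarrow> 'a^'n \<Rightarrow> 'a" where
  "dotc b y = (\<Sum>j\<in>UNIV. b$j * y$j)"

lemma dotc_add: "dotc b (x + y) = dotc b x + dotc b y"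
  by (simp add: dotc_def distrib_left sum.distrib)
lemma dotc_scale: "dotc b (c *s y) = c * dotc b y"
  by (simp add: dotc_def sum_distrib_left mult.left_commute)
lemma dotc_diff: "dotc b (x - y) = dotc b x - dotc b y"
  by (simp add: dotc_def right_diff_distrib sum_subtractf)
lemma dotcL_add: "dotc (x + y) b = dotc x b + dotc y b"
  by (simp add: dotc_def distrib_right sum.distrib)
lemma dotcL_scale: "dotc (c *s y) b = c * dotc y b"
  by (simp add: dotc_def sum_distrib_left mult.assoc)
lemma dotcL_diff: "dotc (x - y) b = dotc x b - dotc y b"
  by (simp add: dotc_def left_diff_distrib sum_subtractf)
lemma dotc_axis: "dotc b (axis k 1) = b$k"
proof -
  have "dotc b (axis k 1) = (\<Sum>j\<in>UNIV. if j = k then b$j else 0)"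
    unfolding dotc_def by (rule sum.cong) (auto simp: axis_def)
  then show ?thesis by simp
qed
lemma dotcL_axis: "dotc (axis k 1) b = b$k"
proof -
  have "dotc (axis k 1) b = (\<Sum>j\<in>UNIV. if j = k then b$j else 0)"
    unfolding dotc_def by (rule sum.cong) (auto simp: axis_def)
  then show ?thesis by simp
qed
lemma axis_nth: "axis k (1::'a::zero_neq_one) $ i = (if i = k then 1 else 0)"
  by (simp add: axis_def)
lemma mv_nth: "(A *v x)$i = dotc (A$i) x"
  by (simp add: matrix_vector_mult_def dotc_def)

lemma vec_split_k: "(v::'a::comm_ring_1^'n) = v$k *s axis k 1 + (\<Sum>j\<in>UNIV-{k}. v$j *s axis j 1)"
proof -
  have "v = (\<Sum>j\<in>UNIV. v$j *s axis j 1)" by (simp add: basis_expansion)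
  also have "\<dots> = v$k *s axis k 1 + (\<Sum>j\<in>UNIV-{k}. v$j *s axis j 1)"
    by (simp add: sum.remove)
  finally show ?thesis .
qed

definition rk1 :: "'a::comm_ring_1^'n \<Rightarrow> 'a^'n \<Rightarrow> 'a^'n^'n" where
  "rk1 a b = (\<chi> i. axis i 1 + a$i *s b)"

lemma rk1_mv: "rk1 a b *v x = x + dotc b x *s a"
  by (simp add: vec_eq_iff mv_nth rk1_def dotcL_add dotcL_scale dotcL_axis mult.commute)

lemma det_L1:
  fixes x :: "'a::field^'n"
  assumes "x \<in> vec.span {axis j 1 | j. j \<noteq> k}"
  shows "det (\<chi> i. if i = k then c *s axis k 1 + x else axis i 1) = c"
proof -
  define A0 :: "'a^'n^'n" where "A0 = (\<chi> i. if i = k then c *s axis k 1 else axis i 1)"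
  have rows: "row j A0 = axis j 1" if "j \<noteq> k" for j
    using that by (simp add: A0_def row_def)
  have rk: "row k A0 = c *s axis k 1" by (simp add: A0_def row_def vec_eq_iff)
  have "{row j A0 | j. j \<noteq> k} = {axis j 1 | j. j \<noteq> k}"
    using rows by (auto; metis)
  then have "det (\<chi> i. if i = k then row k A0 + x else row i A0) = det A0"
    using det_row_span[of x A0 k] assms by simp
  moreover have "(\<chi> i. if i = k then row k A0 + x else row i A0) = (\<chi> i. if i = k then c *s axis k 1 + x else axis i 1)"
    using rows rk by (auto intro!: Cart_lambda_cong)
  moreover have "det A0 = c"
  proof -
    have "det A0 = prod (\<lambda>i. A0$i$i) UNIV"
      by (rule det_diagonal) (auto simp: A0_def axis_def)
    also have "\<dots> = prod (\<lambda>i. if i = k then c else 1) UNIV"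
      by (rule prod.cong) (auto simp: A0_def axis_def)
    also have "\<dots> = c" by (simp add: prod.delta)
    finally show ?thesis .
  qed
  ultimately show ?thesis by simp
qed

lemma span_other:
  "(\<Sum>j\<in>UNIV-{k}. d j *s axis j 1) \<in> vec.span {axis j 1 | j. j \<noteq> k}"
  by (intro vec.span_sum vec.span_scale vec.span_base) auto

lemma det_rk1: "det (rk1 a (b :: 'a::field^'n)) = 1 + dotc b a"
proof (cases "a = 0")
  case True
  then have "rk1 a b = mat 1" by (simp add: rk1_def mat_def vec_eq_iff axis_def)
  then show ?thesis using True by (simp add: dotc_def)
next
  case False
  then obtain k where ak: "a$k \<noteq> 0" by (metis vec_eq_iff zero_index)
  define P :: "'a^'n^'n" where "P = (\<chi> i. axis i 1 + (a$i - (if i = k then 1 else 0)) *s axis k 1)"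
  define s where "s = dotc b a"
  define N :: "'a^'n^'n" where "N = (\<chi> i. if i = k then (1 + s) *s axis k 1 + (\<Sum>j\<in>UNIV-{k}. b$j *s axis j 1) else axis i 1)"
  have Pmv: "P *v x = x + x$k *s (a - axis k 1)" for x
  proof -
    have "(P *v x)$i = (x + x$k *s (a - axis k 1))$i" for i
      by (cases "i = k") (simp_all add: mv_nth P_def dotcL_add dotcL_scale dotcL_axis dotcL_diff axis_nth algebra_simps)
    then show ?thesis by (simp add: vec_eq_iff)
  qed
  have sumk: "(\<Sum>j\<in>UNIV-{k}. b$j *s axis j 1) = b - b$k *s axis k 1"
    using vec_split_k[of b k] by (simp add: algebra_simps)
  have Nmv: "N *v x = x + (dotc b x - b$k * x$k + s * x$k) *s axis k 1" for x
  proof -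
    have "(N *v x)$i = (x + (dotc b x - b$k * x$k + s * x$k) *s axis k 1)$i" for i
    proof (cases "i = k")
      case True
      then show ?thesis
        by (simp add: N_def mv_nth sumk dotcL_add dotcL_scale dotcL_axis dotcL_diff axis_nth algebra_simps)
    next
      case False
      then show ?thesis
        by (simp add: N_def mv_nth dotcL_axis axis_nth)
    qed
    then show ?thesis by (simp add: vec_eq_iff)
  qed
  have MPN: "rk1 a b ** P = P ** N"
  proof (subst matrix_eq, intro allI)
    fix x
    show "(rk1 a b ** P) *v x = (P ** N) *v x"
    proof -
      have d: "dotc b (x + x$k *s (a - axis k 1)) = dotc b x + x$k * (s - b$k)"
        by (simp add: dotc_add dotc_scale dotc_diff dotc_axis s_def algebra_simps)
      have "(x + x$k *s (a - axis k 1) + (dotc b x + x$k * (s - b$k)) *s a)$i =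
         (x + (dotc b x - b$k * x$k + s * x$k) *s axis k 1 +
          (x + (dotc b x - b$k * x$k + s * x$k) *s axis k 1)$k *s (a - axis k 1))$i" for i
      proof (cases "i = k")
        case True then show ?thesis apply (simp add: axis_nth) by (simp add: algebra_simps)
      next
        case False then show ?thesis apply (simp add: axis_nth) by (simp add: algebra_simps)
      qed
      then show ?thesis
        unfolding matrix_vector_mul_assoc[symmetric] rk1_mv Pmv Nmv d
        by (simp add: vec_eq_iff)
    qed
  qed
  have detN: "det N = 1 + s"
    unfolding N_def by (rule det_L1[OF span_other])
  have "transpose P = (\<chi> i. if i = k then a$k *s axis k 1 + (\<Sum>j\<in>UNIV-{k}. a$j *s axis j 1) else axis i 1)"
  proof -
    have tP: "transpose P = (\<chi> i. if i = k then a else axis i 1)"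
      by (simp add: P_def transpose_def vec_eq_iff axis_def)
    have e: "a$k *s axis k 1 + (\<Sum>j\<in>UNIV-{k}. a$j *s axis j 1) = a"
      using vec_split_k[of a k] by simp
    show ?thesis unfolding e by (rule tP)
  qed
  then have detP: "det P = a$k"
    using det_transpose[of P] det_L1[OF span_other, of k "a$k" "\<lambda>j. a$j"] by simp
  have "det (rk1 a b ** P) = det (P ** N)"
    using MPN by simp
  then have "det (rk1 a b) * det P = det P * det N"
    unfolding det_mul .
  then show ?thesis using detP detN ak s_def by simp
qed


definition refl :: "(complex^'n \<Rightarrow> complex^'n \<Rightarrow> complex) \<Rightarrow> complex^'n \<Rightarrow> complex \<Rightarrow> complex^'n^'n" where
  "refl Q u l = rk1 u (\<chi> j. ((l - 1) / Q u u) * Q u (axis j 1))"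

definition Dm :: "(complex^'n \<Rightarrow> complex^'n \<Rightarrow> complex) \<Rightarrow> complex^'n \<Rightarrow> complex^'n \<Rightarrow> complex \<Rightarrow> complex^'n^'n" where
  "Dm Q u w l = refl Q u l ** refl Q w (cnj l)"

lemma sub_diff: "additive_subgroup G \<Longrightarrow> a \<in> G \<Longrightarrow> b \<in> G \<Longrightarrow> a - b \<in> G"
  unfolding additive_subgroup_def by (metis diff_conv_add_uminus)

lemma circ_diff:
  assumes "cmod d \<le> 2"
  shows "\<exists>a b. cmod a = 1 \<and> cmod b = 1 \<and> d = b - a"
proof (cases "d = 0")
  case True then show ?thesis by (rule_tac x=1 in exI, rule_tac x=1 in exI) simp
next
  case False
  define e where "e = d / of_real (cmod d)"
  have e1: "cmod e = 1" using False by (simp add: e_def norm_divide)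
  define r where "r = cmod d / 2"
  have r: "0 \<le> r" "r \<le> 1" using assms by (auto simp: r_def)
  define s where "s = sqrt (1 - r^2)"
  have s2: "s^2 = 1 - r^2" unfolding s_def using r by (simp add: power_le_one)
  have n1: "cmod (Complex r s) = 1" "cmod (Complex (-r) s) = 1"
    using s2 by (simp_all add: cmod_def)
  have "e * Complex r s - e * Complex (-r) s = e * of_real (2 * r)"
    by (simp add: complex_eq_iff algebra_simps)
  also have "\<dots> = d" using False by (simp add: e_def r_def)
  finally show ?thesis
    by (rule_tac x="e * Complex (-r) s" in exI, rule_tac x="e * Complex r s" in exI)
       (simp add: norm_mult e1 n1)
qed

lemma Zall:
  assumes G: "additive_subgroup G"
    and h: "\<forall>l m. cmod l = 1 \<longrightarrow> cmod m = 1 \<longrightarrow> ((m - 1) * (l - 1)) *s p \<in> G"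
  shows "c *s p \<in> G"
proof -
  have dist: "(a - b) *s p = a *s p - b *s p" for a b :: complex by (simp add: vec_eq_iff algebra_simps)
  have A: "(2 * d) *s p \<in> G" if dle: "cmod d \<le> 2" for d
  proof -
    obtain a b where ab: "cmod a = 1" "cmod b = 1" "d = b - a" using circ_diff[OF dle] by blast
    have h1: "((a - 1) * (-1 - 1)) *s p \<in> G" using h[rule_format, of "-1" a] ab(1) by simp
    have h2: "((b - 1) * (-1 - 1)) *s p \<in> G" using h[rule_format, of "-1" b] ab(2) by simp
    have "((a - 1) * (-1 - 1)) *s p - ((b - 1) * (-1 - 1)) *s p \<in> G"
      by (rule sub_diff[OF G h1 h2])
    also have "((a - 1) * (-1 - 1)) *s p - ((b - 1) * (-1 - 1)) *s p = (2 * d) *s p"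
      unfolding dist[symmetric] ab(3) by (simp add: algebra_simps)
    finally show ?thesis .
  qed
  have B: "e *s p \<in> G" if "cmod e \<le> 4" for e
    using A[of "e / 2"] that by (simp add: norm_divide)
  have C: "(of_nat n * e) *s p \<in> G" if "e *s p \<in> G" for n e
  proof (induction n)
    case 0 then show ?case using G by (simp add: additive_subgroup_def)
  next
    case (Suc n)
    have "(of_nat (Suc n) * e) *s p = (of_nat n * e) *s p + e *s p"
      by (simp add: vec_eq_iff algebra_simps)
    then show ?case using Suc that G by (simp add: additive_subgroup_def)
  qed
  define n where "n = nat (ceiling (cmod c)) + 1"
  have m1: "- 1 < cmod c" using norm_ge_zero[of c] by linarith
  have npos: "real n \<ge> 1" unfolding n_def using m1 by simp
  have "cmod c \<le> real n" unfolding n_def using norm_ge_zero[of c] by linarith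
  then have "cmod (c / of_nat n) \<le> 4" using npos by (simp add: norm_divide divide_le_eq)
  then have "(of_nat n * (c / of_nat n)) *s p \<in> G" using B C by blast
  moreover have "of_nat n * (c / of_nat n) = c" using npos by simp
  ultimately show ?thesis by simp
qed


context fixes Q :: "complex^'n \<Rightarrow> complex^'n \<Rightarrow> complex"
  assumes herm: "hermitian_form Q"
begin

lemma QL_add: "Q x (y + z) = Q x y + Q x z" using herm unfolding hermitian_form_def by blast
lemma QL_scale: "Q x (c *s y) = c * Q x y" using herm unfolding hermitian_form_def by blast
lemma Qsym: "Q y x = cnj (Q x y)" using herm unfolding hermitian_form_def by blast
lemma QR_add: "Q (y + z) x = Q y x + Q z x"
  by (metis QL_add Qsym complex_cnj_add)
lemma QR_scale: "Q (c *s y) x = cnj c * Q y x"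
  by (metis QL_scale Qsym complex_cnj_mult)
lemma QL_0[simp]: "Q x 0 = 0"
  using QL_add[of x 0 0] by simp
lemma QR_0[simp]: "Q 0 x = 0"
  using QR_add[of 0 0 x] by simp
lemma QL_neg: "Q x (- y) = - Q x y"
  using QL_add[of x y "-y"] by (simp add: eq_neg_iff_add_eq_0 add.commute)
lemma QR_neg: "Q (- y) x = - Q y x"
  using QR_add[of y "-y" x] by (simp add: eq_neg_iff_add_eq_0 add.commute)
lemma QL_diff: "Q x (y - z) = Q x y - Q x z"
  using QL_add[of x y "-z"] QL_neg[of x z] by simp
lemma QR_diff: "Q (y - z) x = Q y x - Q z x"
  using QR_add[of y "-z" x] QR_neg[of z x] by simp
lemma QL_sum: "Q x (sum f S) = (\<Sum>i\<in>S. Q x (f i))"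
  by (induction S rule: infinite_finite_induct) (auto simp: QL_add)
lemma QR_sum: "Q (sum f S) x = (\<Sum>i\<in>S. Q (f i) x)"
  by (induction S rule: infinite_finite_induct) (auto simp: QR_add)
lemma Q_real: "cnj (Q x x) = Q x x" by (metis Qsym)
lemma Q_coord: "Q u x = (\<Sum>j\<in>UNIV. x$j * Q u (axis j 1))"
proof -
  have "Q u x = Q u (\<Sum>j\<in>UNIV. x$j *s axis j 1)" by (simp add: basis_expansion)
  also have "\<dots> = (\<Sum>j\<in>UNIV. x$j * Q u (axis j 1))" by (simp add: QL_sum QL_scale)
  finally show ?thesis .
qed

lemma dotc_Q: "dotc (\<chi> j. c * Q u (axis j 1)) x = c * Q u x"
proof -
  have "dotc (\<chi> j. c * Q u (axis j 1)) x = c * (\<Sum>j\<in>UNIV. x$j * Q u (axis j 1))"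
    by (simp add: dotc_def sum_distrib_left mult.commute mult.left_commute)
  then show ?thesis by (metis Q_coord)
qed

lemma refl_mv: "refl Q u l *v x = x + ((l - 1) / Q u u * Q u x) *s u"
proof -
  have "dotc (\<chi> j. ((l - 1) / Q u u) * Q u (axis j 1)) x = ((l - 1) / Q u u) * Q u x"
    by (rule dotc_Q)
  then show ?thesis by (simp add: refl_def rk1_mv)
qed

lemma det_refl: assumes "Q u u \<noteq> 0" shows "det (refl Q u l) = l"
proof -
  have "dotc (\<chi> j. ((l - 1) / Q u u) * Q u (axis j 1)) u = ((l - 1) / Q u u) * Q u u"
    by (rule dotc_Q)
  then show ?thesis using assms by (simp add: refl_def det_rk1)
qed

lemma unit_cnj: "cmod l = 1 \<Longrightarrow> cnj l * l = 1"
  by (metis complex_norm_square mult.commute of_real_1 one_power2)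

lemma refl_pres:
  assumes q: "Q u u \<noteq> 0" and l: "cmod l = 1"
  shows "Q (refl Q u l *v x) (refl Q u l *v y) = Q x y"
proof -
  define a where "a = (l - 1) / Q u u"
  have cq: "cnj (Q u u) = Q u u" by (rule Q_real)
  have key: "a + cnj a + cnj a * a * Q u u = 0"
  proof -
    have ca: "cnj a = (cnj l - 1) / Q u u" using cq by (simp add: a_def)
    have "a + cnj a + cnj a * a * Q u u = ((l - 1) + (cnj l - 1) + (cnj l - 1) * (l - 1)) / Q u u"
      unfolding ca unfolding a_def using q by (simp add: field_simps)
    also have "(l - 1) + (cnj l - 1) + (cnj l - 1) * (l - 1) = cnj l * l - 1"
      by (simp add: algebra_simps)
    finally show ?thesis using unit_cnj[OF l] by simp
  qed
  have xu: "Q x u = cnj (Q u x)" by (rule Qsym)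
  have "Q (refl Q u l *v x) (refl Q u l *v y)
      = Q x y + Q u y * cnj (Q u x) * (a + cnj a + cnj a * a * Q u u)"
    unfolding refl_mv a_def[symmetric]
    by (simp add: QL_add QR_add QL_scale QR_scale xu algebra_simps)
  then show ?thesis using key by simp
qed

lemma Dm_SU:
  assumes "Q u u \<noteq> 0" "Q w w \<noteq> 0" "cmod l = 1"
  shows "Dm Q u w l \<in> SU_form Q"
proof -
  have l': "cmod (cnj l) = 1" using assms by simp
  have "det (Dm Q u w l) = l * cnj l" unfolding Dm_def det_mul using assms det_refl by simp
  also have "\<dots> = 1" using unit_cnj[OF assms(3)] by (simp add: mult.commute)
  finally have "det (Dm Q u w l) = 1" .
  moreover have "Q (Dm Q u w l *v x) (Dm Q u w l *v y) = Q x y" for x y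
    unfolding Dm_def matrix_vector_mul_assoc[symmetric]
    using refl_pres[OF assms(1,3)] refl_pres[OF assms(2) l'] by simp
  ultimately show ?thesis unfolding SU_form_def by blast
qed

lemma Dm_mv:
  assumes "Q u w = 0"
  shows "Dm Q u w l *v x = x + ((l - 1) / Q u u * Q u x) *s u + ((cnj l - 1) / Q w w * Q w x) *s w"
  unfolding Dm_def matrix_vector_mul_assoc[symmetric] refl_mv
  using assms by (simp add: QL_add QL_scale algebra_simps)


lemma step:
  assumes G: "additive_subgroup G" and inv: "\<forall>A\<in>SU_form Q. \<forall>x\<in>G. A *v x \<in> G"
   and nu: "Q u u \<noteq> 0" "Q w w \<noteq> 0" "Q v v \<noteq> 0"
   and o: "Q u w = 0" "Q u v = 0" "Q v w = 0"
   and x: "x \<in> G" and l: "cmod l = 1" and m: "cmod m = 1"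
  shows "((m - 1) * (l - 1) * (Q u x / Q u u)) *s u \<in> G"
proof -
  define y where "y = Dm Q u w l *v x - x"
  have yG: "y \<in> G" unfolding y_def
    using sub_diff[OF G] inv Dm_SU[OF nu(1,2) l] x by blast
  have y: "y = ((l - 1) / Q u u * Q u x) *s u + ((cnj l - 1) / Q w w * Q w x) *s w"
    unfolding y_def Dm_mv[OF o(1)] by simp
  define y2 where "y2 = Dm Q u v m *v y - y"
  have y2G: "y2 \<in> G" unfolding y2_def
    using sub_diff[OF G] inv Dm_SU[OF nu(1,3) m] yG by blast
  have vu: "Q v u = 0" using o(2) Qsym[of v u] by simp
  have uy: "Q u y = (l - 1) * Q u x"
    unfolding y using nu(1) o(1) by (simp add: QL_add QL_scale)
  have vy: "Q v y = 0"
    unfolding y using vu o(3) by (simp add: QL_add QL_scale)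
  have "y2 = ((m - 1) / Q u u * Q u y) *s u + ((cnj m - 1) / Q v v * Q v y) *s v"
    unfolding y2_def Dm_mv[OF o(2)] by simp
  also have "\<dots> = ((m - 1) * (l - 1) * (Q u x / Q u u)) *s u"
    unfolding uy vy by (simp add: vec_eq_iff field_simps)
  finally show ?thesis using y2G by simp
qed



lemma ext_orth:
  assumes nd: "nondegenerate_form Q" and fin: "finite V" and card: "card V < CARD('n)"
    and orth: "\<forall>a\<in>V. \<forall>b\<in>V. a \<noteq> b \<longrightarrow> Q a b = 0" and nn: "\<forall>a\<in>V. Q a a \<noteq> 0"
  shows "\<exists>w. Q w w \<noteq> 0 \<and> (\<forall>a\<in>V. Q a w = 0)"
proof -
  define proj where "proj y = y - (\<Sum>a\<in>V. (Q a y / Q a a) *s a)" for y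
  have po: "Q b (proj y) = 0" if b: "b \<in> V" for b y
  proof -
    have "Q b (proj y) = Q b y - (\<Sum>a\<in>V. (Q a y / Q a a) * Q b a)"
      unfolding proj_def by (simp add: QL_diff QL_sum QL_scale)
    also have "(\<Sum>a\<in>V. (Q a y / Q a a) * Q b a) = (\<Sum>a\<in>V. if a = b then Q b y else 0)"
    proof (rule sum.cong)
      fix a assume a: "a \<in> V"
      show "Q a y / Q a a * Q b a = (if a = b then Q b y else 0)"
        using orth a b nn by auto
    qed simp
    also have "\<dots> = Q b y" using fin b by simp
    finally show ?thesis by simp
  qed
  have "\<exists>y. y \<notin> vec.span V"
  proof (rule ccontr)
    assume "\<not> ?thesis"
    then have "UNIV \<subseteq> vec.span V" by auto
    then have "vec.dim (UNIV :: (complex^'n) set) \<le> card V"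
      using vec.span_card_ge_dim[of V UNIV] fin by auto
    then show False using card by (simp add: card_cart_basis)
  qed
  then obtain y where y: "y \<notin> vec.span V" by blast
  define w0 where "w0 = proj y"
  have w0nz: "w0 \<noteq> 0"
  proof
    assume "w0 = 0"
    then have "y = (\<Sum>a\<in>V. (Q a y / Q a a) *s a)" by (simp add: w0_def proj_def)
    moreover have "(\<Sum>a\<in>V. (Q a y / Q a a) *s a) \<in> vec.span V"
      by (intro vec.span_sum vec.span_scale vec.span_base)
    ultimately show False using y by simp
  qed
  then obtain z where z: "Q w0 z \<noteq> 0" using nd unfolding nondegenerate_form_def by blast
  define w1 where "w1 = proj z"
  have w0a: "Q w0 a = 0" if "a \<in> V" for a
    using po[OF that, of y] Qsym[of w0 a] by (simp add: w0_def)
  have c: "Q w0 w1 = Q w0 z"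
  proof -
    have "Q w0 w1 = Q w0 z - (\<Sum>a\<in>V. (Q a z / Q a a) * Q w0 a)"
      unfolding w1_def proj_def by (simp add: QL_diff QL_sum QL_scale)
    also have "(\<Sum>a\<in>V. (Q a z / Q a a) * Q w0 a) = 0"
      using w0a by simp
    finally show ?thesis by simp
  qed
  have o0: "\<forall>a\<in>V. Q a w0 = 0" using po by (simp add: w0_def)
  have o1: "\<forall>a\<in>V. Q a w1 = 0" using po by (simp add: w1_def)
  show ?thesis
  proof (cases "Q w0 w0 \<noteq> 0")
    case True then show ?thesis using o0 by blast
  next
    case f0: False
    show ?thesis
    proof (cases "Q w1 w1 \<noteq> 0")
      case True then show ?thesis using o1 by blast
    next
      case f1: False
      define t where "t = cnj (Q w0 w1)"
      define w where "w = w0 + t *s w1"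
      have "Q w w = t * Q w0 w1 + cnj t * Q w1 w0"
        using f0 f1 by (simp add: w_def QL_add QR_add QL_scale QR_scale algebra_simps)
      also have "\<dots> = 2 * (cnj (Q w0 w1) * Q w0 w1)"
        using Qsym[of w1 w0] by (simp add: t_def)
      also have "\<dots> \<noteq> 0" using z c by simp
      finally have "Q w w \<noteq> 0" .
      moreover have "\<forall>a\<in>V. Q a w = 0" using o0 o1 by (simp add: w_def QL_add QL_scale)
      ultimately show ?thesis by blast
    qed
  qed
qed


lemma triple:
  assumes nd: "nondegenerate_form Q" and N: "CARD('n) \<ge> 3" and u: "Q u u \<noteq> 0"
  shows "\<exists>w v. Q w w \<noteq> 0 \<and> Q v v \<noteq> 0 \<and> Q u w = 0 \<and> Q u v = 0 \<and> Q v w = 0"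
proof -
  obtain w where w: "Q w w \<noteq> 0" "Q u w = 0" using ext_orth[OF nd, of "{u}"] N u by auto
  have uw: "u \<noteq> w" using u w by auto
  have wu: "Q w u = 0" using Qsym[of w u] w by simp
  have c2: "card {u, w} < CARD('n)" using uw N by simp
  obtain v where v: "Q v v \<noteq> 0" "Q u v = 0" "Q w v = 0"
    using ext_orth[OF nd _ c2] u w uw wu by auto
  have "Q v w = 0" using Qsym[of v w] v by simp
  then show ?thesis using v w by blast
qed

lemma inG:
  assumes G: "additive_subgroup G" and inv: "\<forall>A\<in>SU_form Q. \<forall>x\<in>G. A *v x \<in> G"
    and nd: "nondegenerate_form Q" and N: "CARD('n) \<ge> 3"
    and x: "x \<in> G" and s: "Q s s \<noteq> 0" "Q s x \<noteq> 0"
  shows "s \<in> G"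
proof -
  obtain w v where t: "Q w w \<noteq> 0" "Q v v \<noteq> 0" "Q s w = 0" "Q s v = 0" "Q v w = 0"
    using triple[OF nd N s(1)] by blast
  define p where "p = (Q s x / Q s s) *s s"
  have "\<forall>l m. cmod l = 1 \<longrightarrow> cmod m = 1 \<longrightarrow> ((m - 1) * (l - 1)) *s p \<in> G"
  proof (intro allI impI)
    fix l m :: complex assume l: "cmod l = 1" and m: "cmod m = 1"
    have "((m - 1) * (l - 1) * (Q s x / Q s s)) *s s \<in> G"
      by (rule step[OF G inv s(1) t(1) t(2) t(3) t(4) t(5) x l m])
    then show "((m - 1) * (l - 1)) *s p \<in> G" by (simp add: p_def vector_smult_assoc)
  qed
  then have "(Q s s / Q s x) *s p \<in> G" by (rule Zall[OF G])
  moreover have "(Q s s / Q s x) *s p = s" using s by (simp add: p_def vector_smult_assoc)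
  ultimately show ?thesis by simp
qed

lemma exists_a:
  assumes nd: "nondegenerate_form Q" and x: "x \<noteq> 0"
  shows "\<exists>a. Q a a \<noteq> 0 \<and> Q a x \<noteq> 0"
proof -
  obtain z where z: "Q x z \<noteq> 0" using nd x unfolding nondegenerate_form_def by blast
  have zx: "Q z x = cnj (Q x z)" by (rule Qsym)
  have zx0: "Q z x \<noteq> 0" using z zx by simp
  show ?thesis
  proof (cases "Q x x \<noteq> 0")
    case True then show ?thesis by blast
  next
    case fx: False
    show ?thesis
    proof (cases "Q z z \<noteq> 0")
      case True then show ?thesis using zx0 by blast
    next
      case fz: False
      define t where "t = cnj (Q z x)"
      define a where "a = z + t *s x"
      have "Q a a = t * Q z x + cnj t * Q x z"
        using fx fz by (simp add: a_def QL_add QR_add QL_scale QR_scale algebra_simps)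
      also have "\<dots> = 2 * (cnj (Q z x) * Q z x)"
        using zx by (simp add: t_def)
      also have "\<dots> \<noteq> 0" using zx0 by simp
      finally have "Q a a \<noteq> 0" .
      moreover have "Q a x = Q z x" using fx by (simp add: a_def QR_add QR_scale)
      ultimately show ?thesis using zx0 by metis
    qed
  qed
qed

lemma generic_t:
  assumes a: "Q a a \<noteq> 0" "Q a x \<noteq> 0"
  shows "\<exists>t. t \<noteq> 0 \<and> cnj t = t \<and> Q (y + t *s a) (y + t *s a) \<noteq> 0 \<and> Q (y + t *s a) x \<noteq> 0"
proof -
  define p where "p = [:Q y y, Q y a + Q a y, Q a a:] * [:Q y x, Q a x:]"
  have p0: "p \<noteq> 0" using a by (simp add: p_def)
  define S0 where "S0 = {z. poly p z = 0} \<union> {0}"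
  have fS: "finite S0" using poly_roots_finite[OF p0] by (simp add: S0_def)
  have "finite ((of_nat :: nat \<Rightarrow> complex) -` S0)"
    by (rule finite_vimageI[OF fS]) (simp add: inj_on_def)
  then obtain n :: nat where n: "n \<notin> (of_nat :: nat \<Rightarrow> complex) -` S0"
    using ex_new_if_finite[OF infinite_UNIV_nat] by blast
  define t :: complex where "t = of_nat n"
  have tn: "t \<noteq> 0" "poly p t \<noteq> 0" using n by (auto simp: S0_def t_def)
  have ct: "cnj t = t" by (simp add: t_def)
  have "Q (y + t *s a) (y + t *s a) = Q y y + t * (Q y a + Q a y + t * Q a a)"
    using ct by (simp add: QL_add QR_add QL_scale QR_scale algebra_simps)
  moreover have "Q (y + t *s a) x = Q y x + t * Q a x"
    using ct by (simp add: QR_add QR_scale)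
  moreover have "poly p t = (Q y y + t * (Q y a + Q a y + t * Q a a)) * (Q y x + t * Q a x)"
    by (simp add: p_def algebra_simps)
  ultimately show ?thesis using tn ct by (metis mult_eq_0_iff)
qed

end

theorem mainTheorem8:
  fixes Q :: "complex^'n \<Rightarrow> complex^'n \<Rightarrow> complex"
    and G :: "(complex^'n) set"
  assumes "CARD('n) \<ge> 3"
    and "hermitian_form Q"
    and "nondegenerate_form Q"
    and "additive_subgroup G"
    and "\<forall>A\<in>SU_form Q. \<forall>x\<in>G. A *v x \<in> G"
  shows "G = {0} \<or> G = UNIV"
proof (cases "G = {0}")
  case True then show ?thesis by simp
next
  case False
  obtain x where x: "x \<in> G" "x \<noteq> 0" using False assms(4) unfolding additive_subgroup_def by blast
  have S: "s \<in> G" if "Q s s \<noteq> 0" "Q s x \<noteq> 0" for s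
    using inG[OF assms(2) assms(4) assms(5) assms(3) assms(1) x(1) that] .
  obtain a where a: "Q a a \<noteq> 0" "Q a x \<noteq> 0" using exists_a[OF assms(2) assms(3) x(2)] by blast
  have "y \<in> G" for y
  proof -
    obtain t where t: "t \<noteq> 0" "cnj t = t" "Q (y + t *s a) (y + t *s a) \<noteq> 0" "Q (y + t *s a) x \<noteq> 0"
      using generic_t[OF assms(2) a] by blast
    have y1: "y + t *s a \<in> G" using S t by blast
    have "Q (t *s a) (t *s a) = cnj t * (t * Q a a)"
      by (simp add: QL_scale[OF assms(2)] QR_scale[OF assms(2)])
    then have q1: "Q (t *s a) (t *s a) \<noteq> 0" using t a by simp
    have "Q (t *s a) x = cnj t * Q a x" by (simp add: QR_scale[OF assms(2)])
    then have q2: "Q (t *s a) x \<noteq> 0" using t a by simp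
    have y2: "t *s a \<in> G" using S q1 q2 by blast
    have "(y + t *s a) - t *s a \<in> G" by (rule sub_diff[OF assms(4) y1 y2])
    then show ?thesis by simp
  qed
  then show ?thesis by auto
qed

end
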